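(* Let $T$ be the triangle, a linear map $1\to1$ with matrix $\begin{pmatrix}1&1\\0&1\end{pmatrix}$. For $\lambda\in\mathbb{Z}[\tfrac12]$ with $\lambda\ge0$, let $L_\lambda$ be the lambda box, a linear map $1\to1$ with matrix $\begin{pmatrix}1&0\\0&\lambda\end{pmatrix}$. Then $T$ is expressible by a diagram of the $\frac{\pi}{4}$-fragment ZX-calculus, that is, there is such a diagram whose standard interpretation equals the matrix of $T$. Likewise, for every $\lambda\in\mathbb{Z}[\tfrac12]$ with $\lambda\ge 0$, $L_\lambda$ is expressible by a diagram of the $\frac{\pi}{4}$-fragment ZX-calculus.
   Context: The $\frac{\pi}{4}$-fragment ZX-calculus is built as follows. Its diagrams are generated from the generators below, using sequential composition $\circ$ and parallel composition (tensor) $\otimes$. The generators and their standard interpretations $\llbracket\cdot\rrbracket$ as complex matrices are: - the green spider $R_Z^{(n,m)}:n\to m$, with $\llbracket R_Z^{(n,m)}\rrbracket=|0\rangle^{\otimes m}\langle 0|^{\otimes n}+|1\rangle^{\otimes m}\langle 1|^{\otimes n}$; - the green phase $A_\alpha:1\to1$ for $\alpha\in\{\frac{k\pi}{4}:k=0,\dots,7\}$, with $\llbracket A_\alpha\rrbracket=|0\rangle\langle0|+e^{i\alpha}|1\rangle\langle1|$; - the Hadamard gate $H:1\to 1$, with $\llbracket H\rrbracket=\frac1{\sqrt2}\begin{pmatrix}1&1\\1&-1\end{pmatrix}$; - the swap $2\to2$; - the identity $1\to1$; - the empty diagram $0\to0$, interpreted as the scalar $1$; - the cap $0\to2$, with interpretation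 $|00\rangle+|11\rangle$; - the cup $2\to0$, with interpretation $\langle00|+\langle11|$. The interpretation is extended by matrix product for $\circ$ and Kronecker product for $\otimes$. The triangle and the lambda box are not among these generators. *)

theory Defs
  imports Complex_Main
begin

text \<open>A diagram n -> m is interpreted as a
  2^m x 2^n complex matrix, represented as a function on row/column indices
  (rows i < 2^m, columns j < 2^n); basis states are indexed big-endian, so that
  the tensor product is the Kronecker product.\<close>

datatype zx =
    Spider nat nat          (* green spider R_Z^(n,m) : n -> m *)
  | Phase nat              (* green phase A_(k pi/4), k taken mod 8 : 1 -> 1 *)
  | Had
  | Swap
  | Id1
  | Empty
  | Cap
  | Cup
  | Comp zx zx             (* Comp f g = f \<circ> g : first g, then f *)
  | Tens zx zx

fun zx_dom :: "zx \<Rightarrow> nat" where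
  "zx_dom (Spider n m) = n"
| "zx_dom (Phase k) = 1"
| "zx_dom Had = 1"
| "zx_dom Swap = 2"
| "zx_dom Id1 = 1"
| "zx_dom Empty = 0"
| "zx_dom Cap = 0"
| "zx_dom Cup = 2"
| "zx_dom (Comp f g) = zx_dom g"
| "zx_dom (Tens f g) = zx_dom f + zx_dom g"

fun zx_cod :: "zx \<Rightarrow> nat" where
  "zx_cod (Spider n m) = m"
| "zx_cod (Phase k) = 1"
| "zx_cod Had = 1"
| "zx_cod Swap = 2"
| "zx_cod Id1 = 1"
| "zx_cod Empty = 0"
| "zx_cod Cap = 2"
| "zx_cod Cup = 0"
| "zx_cod (Comp f g) = zx_cod f"
| "zx_cod (Tens f g) = zx_cod f + zx_cod g"

fun zx_wf :: "zx \<Rightarrow> bool" where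
  "zx_wf (Comp f g) = (zx_wf f \<and> zx_wf g \<and> zx_dom f = zx_cod g)"
| "zx_wf (Tens f g) = (zx_wf f \<and> zx_wf g)"
| "zx_wf _ = True"

fun zx_interp :: "zx \<Rightarrow> nat \<Rightarrow> nat \<Rightarrow> complex" where
  "zx_interp (Spider n m) i j =
     (if i = 0 \<and> j = 0 then 1 else 0) + (if i = 2^m - 1 \<and> j = 2^n - 1 then 1 else 0)"
| "zx_interp (Phase k) i j =
     (if i = 0 \<and> j = 0 then 1
      else if i = 1 \<and> j = 1 then cis (real (k mod 8) * pi / 4) else 0)"
| "zx_interp Had i j =
     (if i = 1 \<and> j = 1 then - 1 / complex_of_real (sqrt 2) else 1 / complex_of_real (sqrt 2))"
| "zx_interp Swap i j = (if i = 2 * (j mod 2) + j div 2 then 1 else 0)"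
| "zx_interp Id1 i j = (if i = j then 1 else 0)"
| "zx_interp Empty i j = 1"
| "zx_interp Cap i j = (if i = 0 \<or> i = 3 then 1 else 0)"
| "zx_interp Cup i j = (if j = 0 \<or> j = 3 then 1 else 0)"
| "zx_interp (Comp f g) i j =
     (\<Sum>k<2 ^ zx_cod g. zx_interp f i k * zx_interp g k j)"
| "zx_interp (Tens f g) i j =
     zx_interp f (i div 2 ^ zx_cod g) (j div 2 ^ zx_dom g) *
     zx_interp g (i mod 2 ^ zx_cod g) (j mod 2 ^ zx_dom g)"

definition zx_expressible_1_1 :: "(nat \<Rightarrow> nat \<Rightarrow> complex) \<Rightarrow> bool" where
  "zx_expressible_1_1 M \<longleftrightarrow>
     (\<exists>D. zx_wf D \<and> zx_dom D = 1 \<and> zx_cod D = 1 \<and>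
          (\<forall>i<2. \<forall>j<2. zx_interp D i j = M i j))"

definition triangle_mat :: "nat \<Rightarrow> nat \<Rightarrow> complex" where
  "triangle_mat i j = (if i = 1 \<and> j = 0 then 0 else if i \<le> 1 \<and> j \<le> 1 then 1 else 0)"

definition lambda_box_mat :: "complex \<Rightarrow> nat \<Rightarrow> nat \<Rightarrow> complex" where
  "lambda_box_mat l i j = (if i = 0 \<and> j = 0 then 1 else if i = 1 \<and> j = 1 then l else 0)"

end

theory Submission imports Defs begin

lemma cis1: "cis (real (1 mod 8) * pi / 4) = (1 + \<i>) / complex_of_real (sqrt 2)"
proof -
  have "cis (pi/4) = Complex (sqrt 2 / 2) (sqrt 2 / 2)" by (simp add: cis.ctr cos_45 sin_45)
  also have "\<dots> = (1 + \<i>) / complex_of_real (sqrt 2)"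
    by (simp add: complex_eq_iff field_simps)
  finally show ?thesis by simp
qed

lemma cis7: "cis (real (7 mod 8) * pi / 4) = (1 - \<i>) / complex_of_real (sqrt 2)"
proof -
  have e: "real (7 mod 8) * pi / 4 = 2*pi - pi/4" by simp
  have "cis (2*pi - pi/4) = Complex (sqrt 2 / 2) (- (sqrt 2 / 2))"
    unfolding cis.ctr cos_2pi_minus sin_2pi_minus cos_45 sin_45 ..
  also have "\<dots> = (1 - \<i>) / complex_of_real (sqrt 2)"
    by (simp add: complex_eq_iff field_simps)
  finally show ?thesis using e by simp
qed

lemma cis2: "cis (real (2 mod 8) * pi / 4) = \<i>"
proof -
  have e: "real (2 mod 8) * pi / 4 = pi/2" by simp
  show ?thesis unfolding e by (simp add: cis.ctr complex_eq_iff)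
qed

lemma cis4: "cis (real (4 mod 8) * pi / 4) = -1"
proof -
  have e: "real (4 mod 8) * pi / 4 = pi" by simp
  show ?thesis unfolding e by (simp add: cis.ctr complex_eq_iff)
qed

lemma l2: "{..<2::nat} = {0,1}" by auto
lemma l4: "{..<4::nat} = {0,1,2,3}" by auto

definition M11 :: "zx \<Rightarrow> complex \<Rightarrow> complex \<Rightarrow> complex \<Rightarrow> complex \<Rightarrow> bool" where
  "M11 D a b c d \<longleftrightarrow> zx_wf D \<and> zx_dom D = 1 \<and> zx_cod D = 1 \<and>
     zx_interp D 0 0 = a \<and> zx_interp D 0 1 = b \<and> zx_interp D 1 0 = c \<and> zx_interp D 1 1 = d"

definition ST :: "zx \<Rightarrow> complex \<Rightarrow> complex \<Rightarrow> bool" where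
  "ST D a b \<longleftrightarrow> zx_wf D \<and> zx_dom D = 0 \<and> zx_cod D = 1 \<and>
     zx_interp D 0 0 = a \<and> zx_interp D 1 0 = b"

definition SC :: "zx \<Rightarrow> complex \<Rightarrow> bool" where
  "SC D a \<longleftrightarrow> zx_wf D \<and> zx_dom D = 0 \<and> zx_cod D = 0 \<and> zx_interp D 0 0 = a"

lemma M11_comp: "M11 f a b c d \<Longrightarrow> M11 g a' b' c' d' \<Longrightarrow>
  M11 (Comp f g) (a*a'+b*c') (a*b'+b*d') (c*a'+d*c') (c*b'+d*d')"
  by (simp add: M11_def l2 l4)

lemma ST_app: "M11 f a b c d \<Longrightarrow> ST g x y \<Longrightarrow> ST (Comp f g) (a*x+b*y) (c*x+d*y)"
  by (simp add: M11_def ST_def l2 l4)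

lemma SC_co: "ST g x y \<Longrightarrow> SC (Comp (Spider 1 0) g) (x+y)"
  by (simp add: SC_def ST_def l2 l4)

lemma Delta: "ST g x y \<Longrightarrow> M11 (Comp (Spider 2 1) (Tens Id1 g)) x 0 0 y"
  by (simp add: M11_def ST_def l2 l4)

lemma Ewise: "M11 f a b c d \<Longrightarrow> M11 g a' b' c' d' \<Longrightarrow>
  M11 (Comp (Spider 2 1) (Comp (Tens f g) (Spider 1 2))) (a*a') (b*b') (c*c') (d*d')"
  by (simp add: M11_def l2 l4)

lemma M11_sc: "M11 f a b c d \<Longrightarrow> SC s v \<Longrightarrow> M11 (Tens f s) (a*v) (b*v) (c*v) (d*v)"
  by (simp add: M11_def SC_def)

lemma ST_sc: "ST f a b \<Longrightarrow> SC s v \<Longrightarrow> ST (Tens f s) (a*v) (b*v)"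
  by (simp add: ST_def SC_def)

lemma SC_sc: "SC f a \<Longrightarrow> SC s v \<Longrightarrow> SC (Tens f s) (a*v)"
  by (simp add: SC_def)

lemma Had_M: "M11 Had (1/complex_of_real (sqrt 2)) (1/complex_of_real (sqrt 2)) (1/complex_of_real (sqrt 2)) (-1/complex_of_real (sqrt 2))"
  by (simp add: M11_def)

lemma Ph_M: "M11 (Phase k) 1 0 0 (cis (real (k mod 8) * pi / 4))"
  by (simp add: M11_def)

lemma Sp_ST: "ST (Spider 0 1) 1 1"
  by (simp add: ST_def)

lemma M11_eq: "M11 D a b c d \<Longrightarrow> a = a' \<Longrightarrow> b = b' \<Longrightarrow> c = c' \<Longrightarrow> d = d' \<Longrightarrow> M11 D a' b' c' d'"
  by simp

lemma ST_eq: "ST D a b \<Longrightarrow> a = a' \<Longrightarrow> b = b' \<Longrightarrow> ST D a' b'"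
  by simp

definition hh :: complex where "hh = 1 / complex_of_real (sqrt 2)"

lemma hh2: "hh * hh = 1/2"
  unfolding hh_def by (simp flip: of_real_mult)

lemma ii2: "\<i> * \<i> = -1" by simp

lemma Had_M': "M11 Had hh hh hh (-hh)"
  using Had_M unfolding hh_def by simp

lemma cis1': "cis (real (1 mod 8) * pi / 4) = (1 + \<i>) * hh"
  unfolding cis1 hh_def by simp
lemma cis7': "cis (real (7 mod 8) * pi / 4) = (1 - \<i>) * hh"
  unfolding cis7 hh_def by simp

lemma hh3: "hh * (hh * x) = x / 2" by (simp add: mult.assoc[symmetric] hh2)

lemma st_hphi: "ST (Comp Had (Comp (Phase 1) (Spider 0 1))) (hh + (1 + \<i>)/2) (hh - (1 + \<i>)/2)"
proof -
  note P1 = Ph_M[of 1, unfolded cis1']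
  have "ST (Comp Had (Comp (Phase 1) (Spider 0 1))) (hh*(1*1+0*1) + hh*(0*1 + (1 + \<i>) * hh*1)) (hh*(1*1+0*1) + (-hh)*(0*1 + (1 + \<i>) * hh*1))"
    by (rule ST_app[OF Had_M' ST_app[OF P1 Sp_ST]])
  then show ?thesis
    apply (rule ST_eq)
    by (simp_all add: algebra_simps hh2 hh3 add_divide_distrib diff_divide_distrib)
qed

definition "Kp = Comp (Phase 7) (Comp Had (Comp (Comp (Spider 2 1) (Tens Id1 (Comp Had (Comp (Phase 1) (Spider 0 1))))) (Comp Had (Phase 7))))"

lemma Kp_M: "M11 Kp hh hh hh (-\<i>*hh)"
proof -
  note P7 = Ph_M[of 7, unfolded cis7']
  from M11_comp[OF P7 M11_comp[OF Had_M' M11_comp[OF Delta[OF st_hphi] M11_comp[OF Had_M' P7]]]]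
  show ?thesis unfolding Kp_def
    apply (rule M11_eq)
    by (simp_all add: algebra_simps hh2 hh3 add_divide_distrib diff_divide_distrib)
qed

lemma hh4: "hh * (hh * 2) = 1" by (simp add: hh3)

lemma hh3': "hh * (hh * (hh * x)) = hh * x / 2" by (simp add: hh3)

definition "SQ2 = Comp (Spider 1 0) (Comp Had (Spider 0 1))"

lemma SQ2_SC: "SC SQ2 (2*hh)"
proof -
  from SC_co[OF ST_app[OF Had_M' Sp_ST]] show ?thesis unfolding SQ2_def by simp
qed

definition "TD = Tens (Comp Kp (Comp Had (Comp (Phase 2) Kp))) SQ2"

lemma TD_M: "M11 TD 1 1 0 1"
proof -
  note P2 = Ph_M[of 2, unfolded cis2]
  from M11_sc[OF M11_comp[OF Kp_M M11_comp[OF Had_M' M11_comp[OF P2 Kp_M]]] SQ2_SC]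
  show ?thesis unfolding TD_def
    apply (rule M11_eq)
    by (simp_all add: algebra_simps hh2 hh3 hh3' add_divide_distrib diff_divide_distrib)
qed

definition "ISQ2 = Comp (Spider 1 0) (Comp (Comp (Spider 2 1) (Comp (Tens Had (Comp (Spider 2 1) (Comp (Tens Had Had) (Spider 1 2)))) (Spider 1 2))) (Spider 0 1))"

lemma ISQ2_SC: "SC ISQ2 hh"
proof -
  from SC_co[OF ST_app[OF Ewise[OF Had_M' Ewise[OF Had_M' Had_M']] Sp_ST]]
  show ?thesis unfolding ISQ2_def
    by (simp add: algebra_simps hh2 hh3 hh3')
qed

definition "S0 = Tens (Comp Had (Spider 0 1)) ISQ2"

lemma S0_ST: "ST S0 1 0"
proof -
  from ST_sc[OF ST_app[OF Had_M' Sp_ST] ISQ2_SC] show ?thesis unfolding S0_def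
    by (simp add: algebra_simps hh2 hh4)
qed

definition "XX = Comp Had (Comp (Phase 4) Had)"

lemma XX_M: "M11 XX 0 1 1 0"
proof -
  note P4 = Ph_M[of 4, unfolded cis4]
  from M11_comp[OF Had_M' M11_comp[OF P4 Had_M']] show ?thesis unfolding XX_def
    apply (rule M11_eq)
    by (simp_all add: algebra_simps hh2)
qed

definition "Tp = Comp XX (Comp TD XX)"

lemma Tp_M: "M11 Tp 1 0 1 1"
  unfolding Tp_def using M11_comp[OF XX_M M11_comp[OF TD_M XX_M]] by simp

definition "Hf = Comp (Spider 2 1) (Tens Id1 (Tens (Tens (Comp TD (Spider 0 1)) ISQ2) ISQ2))"

lemma Hf_M: "M11 Hf 1 0 0 (1/2)"
proof -
  from Delta[OF ST_sc[OF ST_sc[OF ST_app[OF TD_M Sp_ST] ISQ2_SC] ISQ2_SC]]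
  show ?thesis unfolding Hf_def
    apply (rule M11_eq)
    by (simp_all add: algebra_simps hh2 hh4)
qed

fun stA :: "nat \<Rightarrow> zx" where
  "stA 0 = S0"
| "stA (Suc n) = Comp Tp (stA n)"

lemma stA_ST: "ST (stA n) 1 (of_nat n)"
proof (induction n)
  case 0 then show ?case using S0_ST by simp
next
  case (Suc n)
  from ST_app[OF Tp_M Suc] show ?case by simp
qed

fun stB :: "nat \<Rightarrow> nat \<Rightarrow> zx" where
  "stB a 0 = stA a"
| "stB a (Suc k) = Comp Hf (stB a k)"

lemma stB_ST: "ST (stB a k) 1 (of_nat a / 2 ^ k)"
proof (induction k)
  case 0 then show ?case using stA_ST by simp
next
  case (Suc k)
  from ST_app[OF Hf_M Suc] show ?case by simp
qed

lemma less2: "i < (2::nat) \<Longrightarrow> i = 0 \<or> i = 1" by auto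

lemma M11_expr: "M11 D a b c d \<Longrightarrow> (\<And>i j. i < 2 \<Longrightarrow> j < 2 \<Longrightarrow> M i j = (if i = 0 \<and> j = 0 then a else if i = 0 \<and> j = 1 then b else if i = 1 \<and> j = 0 then c else d)) \<Longrightarrow> zx_expressible_1_1 M"
  unfolding zx_expressible_1_1_def M11_def
  apply (rule exI[of _ D])
  apply (auto dest!: less2)
  done

theorem mainTheorem2:
  shows "zx_expressible_1_1 triangle_mat \<and>
         (\<forall>(a::int) (k::nat). a \<ge> 0 \<longrightarrow>
            zx_expressible_1_1 (lambda_box_mat (of_real (of_int a / 2 ^ k))))"
proof
  show "zx_expressible_1_1 triangle_mat"
    by (rule M11_expr[OF TD_M]) (auto simp add: triangle_mat_def dest!: less2)
  show "\<forall>(a::int) (k::nat). a \<ge> 0 \<longrightarrow>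
            zx_expressible_1_1 (lambda_box_mat (of_real (of_int a / 2 ^ k)))"
  proof (intro allI impI)
    fix a :: int and k :: nat
    assume a: "a \<ge> 0"
    have e: "(of_real (of_int a / 2 ^ k) :: complex) = of_nat (nat a) / 2 ^ k"
      using a by simp
    show "zx_expressible_1_1 (lambda_box_mat (of_real (of_int a / 2 ^ k)))"
      unfolding e
      by (rule M11_expr[OF Delta[OF stB_ST[of "nat a" k]]]) (auto simp add: lambda_box_mat_def dest!: less2)
  qed
qed

end
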